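(* Let $d\ge 3$ and let $\mathfrak M$ be a model of $\mathsf{SpecRel}_d$. Let $m,k\in\mathrm{IOb}$ and $e_1,e_2\in Ev_k$ with $k\in e_1\cap e_2$ and $\mathsf{dist}_m(e_1,e_2)\neq 0$. Then $\mathsf{time}_m(e_1,e_2)>\mathsf{time}_k(e_1,e_2)$.
   Context: Fix a natural number $d\ge 2$. Models are first-order structures $\mathfrak M=\langle U;\mathrm B,\mathrm{Ob},\mathrm{IOb},\mathrm{Ph},\mathrm Q,+,\cdot,\le,\mathrm W\rangle$, where $\mathrm B,\mathrm{Ob},\mathrm{IOb},\mathrm{Ph},\mathrm Q$ are unary relations (subsets of $U$: bodies, observers, inertial observers, photons, quantities), $+,\cdot$ are binary function symbols, $\le$ a binary relation symbol, and $\mathrm W$ a $(2+d)$-ary relation; $\mathrm W(m,b,\vec p)$ is read "observer $m$ coordinatizes body $b$ at coordinate point $\vec p\in\mathrm Q^d$". For $\vec p=\langle p_1,\dots,p_d\rangle\in\mathrm Q^d$ write $p_t:=p_1$ (time component), $\vec p_s:=\langle p_2,\dots,p_d\rangle$ (space component), $|\vec p|:=\sqrt{p_1^2+\dots+p_n^2}$ for $\vec p\in \mathrm Q^n$ (Euclidean length); $\mathrm Q^d$ carries its vector-space operations and $\vec o$ is the origin. Define $ev_m(\vec p):=\{b\in\mathrm B:\mathrm W(m,b,\vec p)\}$, $Cd_m:=\{\vec p\in\mathrm Q^d: ev_m(\vec p)\neq\emptyset\}$, $Ev_m:=\{ev_m(\vec p):\vec p\in Cd_m\}$, $Ev:=\bigcup_{m\in\mathrm{Ob}}Ev_m$.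 $Crd_m(e)$ denotes the unique $\vec p\in Cd_m$ with $ev_m(\vec p)=e$; any statement involving $Crd_m(e)$ (or the notions below built from it) tacitly asserts that such a unique $\vec p$ exists. $\mathsf{time}_m(e_1,e_2):=|Crd_m(e_1)_t-Crd_m(e_2)_t|$, $\mathsf{dist}_m(e_1,e_2):=|Crd_m(e_1)_s-Crd_m(e_2)_s|$, and $e_1\sim_m e_2$ (simultaneous for $m$) iff $Crd_m(e_1)_t=Crd_m(e_2)_t$. $\mathsf{SpecRel}_d$ consists of the axioms: AxFrame: $\mathrm{Ob}\cup\mathrm{Ph}\subseteq\mathrm B$, $\mathrm{IOb}\subseteq\mathrm{Ob}$, $U=\mathrm B\cup\mathrm Q$, $\mathrm B\cap\mathrm Q=\emptyset$, $\mathrm W\subseteq\mathrm{Ob}\times\mathrm B\times\mathrm Q^d$, $+,\cdot$ are binary operations on $\mathrm Q$ and $\le$ is a binary relation on $\mathrm Q$. AxEOF: $\langle\mathrm Q;+,\cdot,\le\rangle$ is a Euclidean ordered field (a linearly ordered field in which every positive element has a square root). AxSelf$^-$: $\forall m\in\mathrm{Ob}\ \forall\vec p\in Cd_m\ (m\in ev_m(\vec p)\iff \vec p_s=\vec o)$. AxPh$_0$: $\forall m\in\mathrm{IOb}\ \forall\vec p,\vec q\in\mathrm Q^d\ (|\vec p_s-\vec q_s|=|p_t-q_t|\iff \mathrm{Ph}\cap ev_m(\vec p)\cap ev_m(\vec q)\neq\emptyset)$. AxEv: $\forall m,k\in\mathrm{IOb}\ Ev_m=Ev_k$. AxSimDist: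 $\forall m,k\in\mathrm{IOb}\ \forall e_1,e_2\in Ev_m\ (e_1\sim_m e_2\wedge e_1\sim_k e_2\Rightarrow \mathsf{dist}_m(e_1,e_2)=\mathsf{dist}_k(e_1,e_2))$. *)

theory Defs
  imports Main
begin

text \<open>Two-sorted rendering of the models of SpecRel_d: bodies live in a type 'b
 (the set B of bodies is a parameter), quantities are the type 'q, which is a
 linearly ordered field (Euclidean property assumed separately).
 Coordinate points in Q^d are lists of quantities of length d; component 1
 (the time component) is the head, the space component is the tail.\<close>

definition euclidean_field :: "'q::linordered_field itself \<Rightarrow> bool" where
  "euclidean_field T \<longleftrightarrow> (\<forall>x::'q. 0 < x \<longrightarrow> (\<exists>y. y * y = x))"

definition qsqrt :: "'q::linordered_field \<Rightarrow> 'q" where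
  "qsqrt x = (THE y. 0 \<le> y \<and> y * y = x)"

definition vlen :: "'q::linordered_field list \<Rightarrow> 'q" where
  "vlen v = qsqrt (sum_list (map (\<lambda>x. x * x) v))"

definition vsub :: "'q::linordered_field list \<Rightarrow> 'q list \<Rightarrow> 'q list" where
  "vsub p q = map2 (-) p q"

definition tcomp :: "'q list \<Rightarrow> 'q" where
  "tcomp p = hd p"

definition scomp :: "'q list \<Rightarrow> 'q list" where
  "scomp p = tl p"

definition ev :: "'b set \<Rightarrow> ('b \<Rightarrow> 'b \<Rightarrow> 'q list \<Rightarrow> bool) \<Rightarrow> 'b \<Rightarrow> 'q list \<Rightarrow> 'b set" where
  "ev B W m p = {b \<in> B. W m b p}"

definition Cd :: "nat \<Rightarrow> 'b set \<Rightarrow> ('b \<Rightarrow> 'b \<Rightarrow> 'q list \<Rightarrow> bool) \<Rightarrow> 'b \<Rightarrow> 'q list set" where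
  "Cd d B W m = {p. length p = d \<and> ev B W m p \<noteq> {}}"

definition Evs :: "nat \<Rightarrow> 'b set \<Rightarrow> ('b \<Rightarrow> 'b \<Rightarrow> 'q list \<Rightarrow> bool) \<Rightarrow> 'b \<Rightarrow> 'b set set" where
  "Evs d B W m = {ev B W m p | p. p \<in> Cd d B W m}"

text \<open>Existence of a unique coordinate point (tacitly asserted whenever Crd is used).\<close>
definition has_crd :: "nat \<Rightarrow> 'b set \<Rightarrow> ('b \<Rightarrow> 'b \<Rightarrow> 'q list \<Rightarrow> bool) \<Rightarrow> 'b \<Rightarrow> 'b set \<Rightarrow> bool" where
  "has_crd d B W m e \<longleftrightarrow> (\<exists>!p. p \<in> Cd d B W m \<and> ev B W m p = e)"

definition Crd :: "nat \<Rightarrow> 'b set \<Rightarrow> ('b \<Rightarrow> 'b \<Rightarrow> 'q list \<Rightarrow> bool) \<Rightarrow> 'b \<Rightarrow> 'b set \<Rightarrow> 'q list" where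
  "Crd d B W m e = (THE p. p \<in> Cd d B W m \<and> ev B W m p = e)"

definition time_ob :: "nat \<Rightarrow> 'b set \<Rightarrow> ('b \<Rightarrow> 'b \<Rightarrow> 'q::linordered_field list \<Rightarrow> bool) \<Rightarrow> 'b \<Rightarrow> 'b set \<Rightarrow> 'b set \<Rightarrow> 'q" where
  "time_ob d B W m e1 e2 = \<bar>tcomp (Crd d B W m e1) - tcomp (Crd d B W m e2)\<bar>"

definition dist_ob :: "nat \<Rightarrow> 'b set \<Rightarrow> ('b \<Rightarrow> 'b \<Rightarrow> 'q::linordered_field list \<Rightarrow> bool) \<Rightarrow> 'b \<Rightarrow> 'b set \<Rightarrow> 'b set \<Rightarrow> 'q" where
  "dist_ob d B W m e1 e2 = vlen (vsub (scomp (Crd d B W m e1)) (scomp (Crd d B W m e2)))"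

definition sim_ob :: "nat \<Rightarrow> 'b set \<Rightarrow> ('b \<Rightarrow> 'b \<Rightarrow> 'q list \<Rightarrow> bool) \<Rightarrow> 'b \<Rightarrow> 'b set \<Rightarrow> 'b set \<Rightarrow> bool" where
  "sim_ob d B W m e1 e2 \<longleftrightarrow> has_crd d B W m e1 \<and> has_crd d B W m e2 \<and>
     tcomp (Crd d B W m e1) = tcomp (Crd d B W m e2)"

definition SpecRel :: "nat \<Rightarrow> 'b set \<Rightarrow> 'b set \<Rightarrow> 'b set \<Rightarrow> 'b set \<Rightarrow>
    ('b \<Rightarrow> 'b \<Rightarrow> 'q::linordered_field list \<Rightarrow> bool) \<Rightarrow> bool" where
  "SpecRel d B Ob IOb Ph W \<longleftrightarrow>
     \<comment> \<open>AxFrame\<close>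
     Ob \<union> Ph \<subseteq> B \<and> IOb \<subseteq> Ob \<and>
     (\<forall>m b p. W m b p \<longrightarrow> m \<in> Ob \<and> b \<in> B \<and> length p = d) \<and>
     \<comment> \<open>AxEOF\<close>
     euclidean_field TYPE('q) \<and>
     \<comment> \<open>AxSelf-\<close>
     (\<forall>m\<in>Ob. \<forall>p\<in>Cd d B W m. m \<in> ev B W m p \<longleftrightarrow> scomp p = replicate (d - 1) 0) \<and>
     \<comment> \<open>AxPh0\<close>
     (\<forall>m\<in>IOb. \<forall>p q. length p = d \<and> length q = d \<longrightarrow>
        (vlen (vsub (scomp p) (scomp q)) = \<bar>tcomp p - tcomp q\<bar> \<longleftrightarrow>
         Ph \<inter> ev B W m p \<inter> ev B W m q \<noteq> {})) \<and>
     \<comment> \<open>AxEv\<close>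
     (\<forall>m\<in>IOb. \<forall>k\<in>IOb. Evs d B W m = Evs d B W k) \<and>
     \<comment> \<open>AxSimDist\<close>
     (\<forall>m\<in>IOb. \<forall>k\<in>IOb. \<forall>e1\<in>Evs d B W m. \<forall>e2\<in>Evs d B W m.
        sim_ob d B W m e1 e2 \<and> sim_ob d B W k e1 e2 \<longrightarrow>
        dist_ob d B W m e1 e2 = dist_ob d B W k e1 e2)"

end

theory Submission
  imports Defs
begin

lemma qsqrt_prop:
  assumes EF: "euclidean_field TYPE('q::linordered_field)" and x: "0 \<le> (x::'q)"
  shows "0 \<le> qsqrt x \<and> qsqrt x * qsqrt x = x"
proof -
  have ex: "\<exists>y. 0 \<le> y \<and> y * y = x"
  proof (cases "x = 0")
    case True then show ?thesis by auto
  next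
    case False
    then have "0 < x" using x by simp
    then obtain y where "y * y = x" using EF unfolding euclidean_field_def by blast
    then show ?thesis by (intro exI[of _ "\<bar>y\<bar>"]) (simp add: abs_mult_self_eq)
  qed
  have un: "\<And>y z. 0 \<le> y \<and> y * y = x \<Longrightarrow> 0 \<le> z \<and> z * z = x \<Longrightarrow> y = z"
    by (metis power2_eq_iff_nonneg power2_eq_square)
  have "\<exists>!y. 0 \<le> y \<and> y * y = x" using ex un by blast
  from theI'[OF this] show ?thesis unfolding qsqrt_def by blast
qed

lemma qsqrt_eq:
  assumes EF: "euclidean_field TYPE('q::linordered_field)" and x: "0 \<le> (x::'q)"
  shows "qsqrt x = \<bar>t\<bar> \<longleftrightarrow> x = t * t"
proof
  assume "qsqrt x = \<bar>t\<bar>" then show "x = t * t" using qsqrt_prop[OF EF x]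
    by (metis abs_mult_self_eq)
next
  assume h: "x = t * t"
  have "\<exists>!y. 0 \<le> y \<and> y * y = x"
    using qsqrt_prop[OF EF x] by (metis power2_eq_iff_nonneg power2_eq_square)
  moreover have "0 \<le> \<bar>t\<bar> \<and> \<bar>t\<bar> * \<bar>t\<bar> = x" using h by (simp add: abs_mult_self_eq)
  ultimately show "qsqrt x = \<bar>t\<bar>" unfolding qsqrt_def by (metis (mono_tags, lifting) the_equality)
qed

definition ssd :: "nat \<Rightarrow> 'q::linordered_field list \<Rightarrow> 'q list \<Rightarrow> 'q" where
  "ssd d p q = (\<Sum>i\<in>{1..<d}. (p!i - q!i)^2)"

definition light :: "nat \<Rightarrow> 'q::linordered_field list \<Rightarrow> 'q list \<Rightarrow> bool" where
  "light d p q \<longleftrightarrow> ssd d p q = (p!0 - q!0)^2"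

definition mk :: "nat \<Rightarrow> (nat \<Rightarrow> 'q) \<Rightarrow> 'q list" where
  "mk d g = map g [0..<d]"

lemma mk_nth[simp]: "i < d \<Longrightarrow> mk d g ! i = g i" and mk_len[simp]: "length (mk d g) = d"
  by (auto simp: mk_def)

lemma sumsq_bridge:
  assumes "length p = d" "length q = d" "d \<ge> 1"
  shows "sum_list (map (\<lambda>x. x * x) (vsub (scomp p) (scomp q))) = ssd d p q"
proof -
  have "sum_list (map (\<lambda>x. x * x) (vsub (scomp p) (scomp q)))
      = (\<Sum>i = 0..<d-1. (p!(Suc i) - q!(Suc i))^2)"
    using assms by (simp add: sum_list_sum_nth vsub_def scomp_def power2_eq_square nth_tl)
  also have "\<dots> = (\<Sum>i\<in>{Suc 0..<Suc (d-1)}. (p!i - q!i)^2)"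
    by (simp only: sum.shift_bounds_Suc_ivl)
  finally show ?thesis using assms by (simp add: ssd_def)
qed

lemma ssd_nonneg: "0 \<le> ssd d p q" by (simp add: ssd_def sum_nonneg)

lemma ssd_sym: "ssd d p q = ssd d q p"
  unfolding ssd_def by (rule sum.cong) (auto simp: power2_commute)

lemma sq_comb:
  fixes a b :: "nat \<Rightarrow> 'q::linordered_field"
  shows "(\<Sum>i\<in>A. (\<alpha> * a i + \<beta> * b i)^2) = \<alpha>^2 * (\<Sum>i\<in>A. (a i)^2) + 2*\<alpha>*\<beta>*(\<Sum>i\<in>A. a i * b i) + \<beta>^2 * (\<Sum>i\<in>A. (b i)^2)"
  by (simp add: power2_sum power_mult_distrib sum.distrib sum_distrib_left algebra_simps)

lemma sumsq_zero:
  fixes a :: "nat \<Rightarrow> 'q::linordered_field"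
  assumes "(\<Sum>i\<in>{1..<d}. (a i)^2) = 0" "i \<in> {1..<d}" shows "a i = 0"
  using assms sum_nonneg_eq_0_iff[of "{1..<d}" "\<lambda>i. (a i)^2"] by auto

lemma line_char:
  assumes len: "length p = d" "length q = d" "length X = d" "d \<ge> 1"
    and pq: "light d p q" and ne: "p \<noteq> q" and Xp: "light d X p" and Xq: "light d X q"
  shows "\<exists>\<sigma>. X = mk d (\<lambda>i. p!i + \<sigma>*(q!i - p!i))"
proof -
  define \<alpha> where "\<alpha> = q!0 - p!0"
  define \<gamma> where "\<gamma> = X!0 - p!0"
  define \<beta> where "\<beta> = (\<lambda>i. q!i - p!i)"
  define \<delta> where "\<delta> = (\<lambda>i. X!i - p!i)"
  let ?I = "{1..<d}"
  have Sbb: "(\<Sum>i\<in>?I. (\<beta> i)^2) = \<alpha>^2"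
    using pq unfolding light_def ssd_def \<beta>_def \<alpha>_def by (simp add: power2_commute)
  have Sdd: "(\<Sum>i\<in>?I. (\<delta> i)^2) = \<gamma>^2"
    using Xp unfolding light_def ssd_def \<delta>_def \<gamma>_def by simp
  have "(\<Sum>i\<in>?I. (1 * \<delta> i + (-1) * \<beta> i)^2) = (\<gamma> - \<alpha>)^2"
    using Xq unfolding light_def ssd_def \<delta>_def \<gamma>_def \<beta>_def \<alpha>_def
    by (simp add: algebra_simps)
  then have "\<gamma>^2 - 2 * (\<Sum>i\<in>?I. \<delta> i * \<beta> i) + \<alpha>^2 = (\<gamma> - \<alpha>)^2"
    unfolding sq_comb Sbb Sdd by simp
  then have Sdb: "(\<Sum>i\<in>?I. \<delta> i * \<beta> i) = \<gamma> * \<alpha>"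
    by (simp add: power2_diff)
  have a0: "\<alpha> \<noteq> 0"
  proof
    assume "\<alpha> = 0"
    then have "\<And>i. i \<in> ?I \<Longrightarrow> \<beta> i = 0" using Sbb sumsq_zero[of \<beta> d] by auto
    then have "p = q" using len \<open>\<alpha> = 0\<close> unfolding \<beta>_def \<alpha>_def
      by (intro nth_equalityI) (auto, metis Suc_leI neq0_conv)
    then show False using ne by simp
  qed
  define \<sigma> where "\<sigma> = \<gamma> / \<alpha>"
  have sa: "\<sigma> * \<alpha> = \<gamma>" using a0 by (simp add: \<sigma>_def)
  have "(\<Sum>i\<in>?I. (1 * \<delta> i + (-\<sigma>) * \<beta> i)^2) = \<gamma>^2 - 2*\<sigma>*(\<gamma>*\<alpha>) + \<sigma>^2 * \<alpha>^2"
    unfolding sq_comb Sbb Sdd Sdb by simp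
  also have "\<dots> = 0" using sa by (simp add: power2_eq_square algebra_simps)
  finally have z: "\<And>i. i \<in> ?I \<Longrightarrow> \<delta> i - \<sigma> * \<beta> i = 0"
    using sumsq_zero[of "\<lambda>i. 1 * \<delta> i + (-\<sigma>) * \<beta> i" d] by simp
  show ?thesis
  proof (intro exI[of _ \<sigma>] nth_equalityI)
    fix i assume "i < length X"
    then have i: "i < d" using len by simp
    show "X ! i = mk d (\<lambda>i. p ! i + \<sigma> * (q ! i - p ! i)) ! i"
    proof (cases "i = 0")
      case True then show ?thesis using i sa unfolding \<gamma>_def \<alpha>_def by simp
    next
      case False then show ?thesis using i z[of i] unfolding \<delta>_def \<beta>_def by simp
    qed
  qed (use len in simp)
qed

lemma perp:
  fixes v :: "nat \<Rightarrow> 'q::linordered_field"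
  assumes d3: "d \<ge> 3" and EF: "euclidean_field TYPE('q)" and R: "0 \<le> R"
  shows "\<exists>w::nat\<Rightarrow>'q. (\<Sum>i\<in>{1..<d}. w i * v i) = 0 \<and> (\<Sum>i\<in>{1..<d}. (w i)^2) = R"
proof -
  let ?I = "{1..<d}"
  have "\<exists>w'::nat\<Rightarrow>'q. (\<Sum>i\<in>?I. w' i * v i) = 0 \<and> 0 < (\<Sum>i\<in>?I. (w' i)^2)"
  proof (cases "\<forall>i\<in>?I. v i = 0")
    case True
    define w' where "w' = (\<lambda>i::nat. if i = 1 then (1::'q) else 0)"
    have "(\<Sum>i\<in>?I. w' i * v i) = 0" using True by (simp add: w'_def)
    moreover have "(\<Sum>i\<in>?I. (w' i)^2) = 1"
    proof -
      have "(\<Sum>i\<in>?I. (w' i)^2) = (\<Sum>i\<in>?I. if i = 1 then 1 else 0)"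
        by (rule sum.cong) (auto simp: w'_def)
      also have "\<dots> = 1" using d3 by (simp add: sum.delta)
      finally show ?thesis .
    qed
    ultimately show ?thesis by (intro exI[of _ w']) simp
  next
    case False
    then obtain j where j: "j \<in> ?I" "v j \<noteq> 0" by auto
    define i0 where "i0 = (if j = 1 then 2 else (1::nat))"
    have i0: "i0 \<in> ?I" "i0 \<noteq> j" using d3 j by (auto simp: i0_def)
    define w' where "w' = (\<lambda>i. (if i = i0 then v j else 0) + (if i = j then - v i0 else 0))"
    have "(\<Sum>i\<in>?I. w' i * v i) = (\<Sum>i\<in>?I. (if i = i0 then v j * v i0 else 0) + (if i = j then - v i0 * v j else 0))"
      by (rule sum.cong) (auto simp: w'_def)
    also have "\<dots> = 0" using i0 j by (simp add: sum.distrib sum.delta)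
    finally have a: "(\<Sum>i\<in>?I. w' i * v i) = 0" .
    have "(\<Sum>i\<in>?I. (w' i)^2) = (\<Sum>i\<in>?I. (if i = i0 then (v j)^2 else 0) + (if i = j then (v i0)^2 else 0))"
      by (rule sum.cong) (use i0 in \<open>auto simp: w'_def\<close>)
    also have "\<dots> = (v j)^2 + (v i0)^2" using i0 j by (simp add: sum.distrib sum.delta)
    finally have b: "(\<Sum>i\<in>?I. (w' i)^2) = (v j)^2 + (v i0)^2" .
    have "0 < (v j)^2 + (v i0)^2" using j(2) by (simp add: add_pos_nonneg)
    with a b show ?thesis by (intro exI[of _ w']) simp
  qed
  then obtain w' where w': "(\<Sum>i\<in>?I. w' i * v i) = 0" "0 < (\<Sum>i\<in>?I. (w' i)^2)" by blast
  define N where "N = (\<Sum>i\<in>?I. (w' i)^2)"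
  have N: "0 < N" using w' by (simp add: N_def)
  define \<mu> where "\<mu> = qsqrt (R / N)"
  have mu: "\<mu> * \<mu> = R / N" using qsqrt_prop[OF EF, of "R/N"] R N by (simp add: \<mu>_def)
  show ?thesis
  proof (intro exI[of _ "\<lambda>i. \<mu> * w' i"] conjI)
    show "(\<Sum>i\<in>?I. \<mu> * w' i * v i) = 0" using w'(1)
      by (simp add: mult.assoc sum_distrib_left[symmetric])
    have "(\<Sum>i\<in>?I. (\<mu> * w' i)^2) = (\<mu> * \<mu>) * N"
      unfolding N_def sum_distrib_left by (rule sum.cong) (simp_all add: power2_eq_square algebra_simps)
    then show "(\<Sum>i\<in>?I. (\<mu> * w' i)^2) = R" using mu N by simp
  qed
qed

lemma ssd_two:
  "ssd d r1 r2 = ssd d r1 p + ssd d r2 p - 2 * (\<Sum>i\<in>{1..<d}. (r1!i - p!i)*(r2!i - p!i))"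
proof -
  have "ssd d r1 r2 = (\<Sum>i\<in>{1..<d}. (1 * (r1!i - p!i) + (-1) * (r2!i - p!i))^2)"
    unfolding ssd_def by (rule sum.cong) (auto simp: algebra_simps)
  then show ?thesis unfolding sq_comb ssd_def by simp
qed

lemma ssd_two_le:
  "0 \<le> ssd d r1 p + ssd d r2 p + 2 * (\<Sum>i\<in>{1..<d}. (r1!i - p!i)*(r2!i - p!i))"
proof -
  have "0 \<le> (\<Sum>i\<in>{1..<d}. (1 * (r1!i - p!i) + 1 * (r2!i - p!i))^2)" by (simp add: sum_nonneg)
  then show ?thesis unfolding sq_comb ssd_def by simp
qed

lemma sphere:
  assumes same: "\<forall>i\<in>{1..<d}. p1!i = p2!i" and h: "h = (p2!0 - p1!0)/2" "h \<noteq> 0"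
    and l1: "light d r p1" and l2: "light d r p2"
  shows "r!0 = p1!0 + h \<and> ssd d r p1 = h^2"
proof -
  have "ssd d r p1 = ssd d r p2" unfolding ssd_def by (rule sum.cong) (use same in auto)
  then have e: "(r!0 - p1!0)^2 = (r!0 - p1!0 - 2*h)^2" using l1 l2 h(1) unfolding light_def
    by (simp add: algebra_simps)
  have "4*h*(r!0 - p1!0) = 4*h*h" using e by algebra
  then have "r!0 - p1!0 = h" using h(2) by simp
  then show ?thesis using l1 unfolding light_def by simp
qed

lemma slice:
  fixes P Q :: "'q::linordered_field list"
  assumes d3: "d \<ge> 3" and EF: "euclidean_field TYPE('q)"
    and V: "V = ssd d Q P" "0 < V"
    and c: "c = (V - (Q!0-P!0)^2 + 2*t*(Q!0-P!0))/2"
    and R: "R = t^2 - c^2/V" "0 \<le> R"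
  shows "\<exists>y1 y2. length y1 = d \<and> length y2 = d \<and> light d y1 P \<and> light d y1 Q \<and>
     light d y2 P \<and> light d y2 Q \<and> y1!0 = P!0 + t \<and> y2!0 = P!0 + t \<and>
     ssd d y1 y2 = 4*R \<and> (\<forall>i\<in>{1..<d}. y1!i + y2!i = 2*P!i + 2*(c/V)*(Q!i - P!i))"
proof -
  let ?I = "{1..<d}"
  define v where "v = (\<lambda>i. Q!i - P!i)"
  obtain w where w: "(\<Sum>i\<in>?I. w i * v i) = 0" "(\<Sum>i\<in>?I. (w i)^2) = R"
    using perp[OF d3 EF R(2)] by blast
  have vw: "(\<Sum>i\<in>?I. v i * w i) = 0" using w(1) by (simp add: mult.commute)
  have vv: "(\<Sum>i\<in>?I. (v i)^2) = V" using V(1) by (simp add: ssd_def v_def)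
  have Vne: "V \<noteq> 0" using V by simp
  define y1 where "y1 = mk d (\<lambda>i. if i = 0 then P!0 + t else P!i + (c/V) * v i + w i)"
  define y2 where "y2 = mk d (\<lambda>i. if i = 0 then P!0 + t else P!i + (c/V) * v i - w i)"
  have d0: "0 < d" using d3 by simp
  have y10: "y1!0 = P!0 + t" and y20: "y2!0 = P!0 + t" using d0 by (simp_all add: y1_def y2_def)
  have key1: "(c/V)^2 * V + R = t^2" using Vne R(1) by (simp add: field_simps power2_eq_square)
  have k2a: "(c/V - 1)^2 * V = c^2/V - 2*c + V" using Vne by (simp add: field_simps power2_eq_square)
  have k2b: "(c/V - 1)^2 * V + R = t^2 - 2*c + V" using k2a R(1) by simp
  have c2: "2*c = V - (Q!0-P!0)^2 + 2*t*(Q!0-P!0)" using c by simp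
  have key2: "(c/V - 1)^2 * V + R = (P!0 + t - Q!0)^2" unfolding k2b using c2 by algebra
  have l1P: "light d y1 P"
  proof -
    have "ssd d y1 P = (\<Sum>i\<in>?I. ((c/V) * v i + 1 * w i)^2)"
      unfolding ssd_def by (rule sum.cong) (auto simp: y1_def)
    also have "\<dots> = t^2" unfolding sq_comb vv vw w(2) using key1 by simp
    finally show ?thesis unfolding light_def y10 by simp
  qed
  have l2P: "light d y2 P"
  proof -
    have "ssd d y2 P = (\<Sum>i\<in>?I. ((c/V) * v i + (-1) * w i)^2)"
      unfolding ssd_def by (rule sum.cong) (auto simp: y2_def)
    also have "\<dots> = t^2" unfolding sq_comb vv vw w(2) using key1 by simp
    finally show ?thesis unfolding light_def y20 by simp
  qed
  have l1Q: "light d y1 Q"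
  proof -
    have "ssd d y1 Q = (\<Sum>i\<in>?I. ((c/V - 1) * v i + 1 * w i)^2)"
      unfolding ssd_def by (rule sum.cong) (auto simp: y1_def v_def algebra_simps)
    also have "\<dots> = (P!0 + t - Q!0)^2" unfolding sq_comb vv vw w(2) using key2 by simp
    finally show ?thesis unfolding light_def y10 by simp
  qed
  have l2Q: "light d y2 Q"
  proof -
    have "ssd d y2 Q = (\<Sum>i\<in>?I. ((c/V - 1) * v i + (-1) * w i)^2)"
      unfolding ssd_def by (rule sum.cong) (auto simp: y2_def v_def algebra_simps)
    also have "\<dots> = (P!0 + t - Q!0)^2" unfolding sq_comb vv vw w(2) using key2 by simp
    finally show ?thesis unfolding light_def y20 by simp
  qed
  have s12: "ssd d y1 y2 = 4*R"
  proof -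
    have "ssd d y1 y2 = (\<Sum>i\<in>?I. 4 * (w i)^2)"
      unfolding ssd_def by (rule sum.cong) (auto simp: y1_def y2_def power2_eq_square algebra_simps)
    then show ?thesis using w(2) by (simp add: sum_distrib_left[symmetric])
  qed
  have sum: "\<forall>i\<in>?I. y1!i + y2!i = 2*P!i + 2*(c/V)*(Q!i - P!i)"
    by (auto simp: y1_def y2_def v_def)
  have len: "length y1 = d" "length y2 = d" by (simp_all add: y1_def y2_def)
  show ?thesis using len y10 y20 l1P l2P l1Q l2Q s12 sum by blast
qed

lemma light_sym: "light d p q \<longleftrightarrow> light d q p"
  unfolding light_def by (simp add: ssd_sym power2_commute)

lemma comb_light:
  assumes "light d p q" "0 < d"
  shows "light d (mk d (\<lambda>i. p!i + s*(q!i - p!i))) p \<and> light d (mk d (\<lambda>i. p!i + s*(q!i - p!i))) q"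
proof -
  let ?x = "mk d (\<lambda>i. p!i + s*(q!i - p!i))"
  have base: "ssd d q p = (q!0 - p!0)^2" using assms(1) by (simp add: light_def ssd_sym power2_commute)
  have "ssd d ?x p = (\<Sum>i\<in>{1..<d}. s^2 * (q!i - p!i)^2)"
    unfolding ssd_def by (rule sum.cong) (auto simp: power_mult_distrib)
  also have "\<dots> = s^2 * ssd d q p" by (simp add: ssd_def sum_distrib_left)
  finally have 1: "ssd d ?x p = (?x!0 - p!0)^2" using base assms(2) by (simp add: power_mult_distrib)
  have "ssd d ?x q = (\<Sum>i\<in>{1..<d}. (s-1)^2 * (q!i - p!i)^2)"
    unfolding ssd_def by (rule sum.cong) (auto simp: power2_eq_square algebra_simps)
  also have "\<dots> = (s-1)^2 * ssd d q p" by (simp add: ssd_def sum_distrib_left)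
  finally have 2: "ssd d ?x q = (?x!0 - q!0)^2" using base assms(2)
    by (simp add: power2_eq_square algebra_simps)
  show ?thesis using 1 2 by (simp add: light_def)
qed

lemma core:
  fixes C :: "'q::linordered_field list \<Rightarrow> 'q list \<Rightarrow> bool"
  assumes d3: "d \<ge> 3" and EF: "euclidean_field TYPE('q)"
    and Clen: "\<And>p p'. C p p' \<Longrightarrow> length p = d \<and> length p' = d"
    and Ctot: "\<And>p. length p = d \<Longrightarrow> \<exists>p'. C p p'"
    and Csur: "\<And>p'. length p' = d \<Longrightarrow> \<exists>p. C p p'"
    and Cfun: "\<And>p p' q'. C p p' \<Longrightarrow> C p q' \<Longrightarrow> p' = q'"
    and Clt: "\<And>p p' q q'. C p p' \<Longrightarrow> C q q' \<Longrightarrow> light d p q \<longleftrightarrow> light d p' q'"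
    and Csim: "\<And>p p' q q'. C p p' \<Longrightarrow> C q q' \<Longrightarrow> p!0 = q!0 \<Longrightarrow> p'!0 = q'!0 \<Longrightarrow> ssd d p q = ssd d p' q'"
    and C1: "C p1 P" and C2: "C p2 Q"
    and same: "\<forall>i\<in>{1..<d}. p1!i = p2!i"
    and VV: "ssd d P Q \<noteq> 0"
  shows "(p1!0 - p2!0)^2 < (P!0 - Q!0)^2"
proof -
  let ?I = "{1..<d}"
  have d0: "0 < d" using d3 by simp
  have len: "length p1 = d" "length p2 = d" "length P = d" "length Q = d" using Clen C1 C2 by auto
  define h where "h = (p2!0 - p1!0)/2"
  have h0: "h \<noteq> 0"
  proof
    assume "h = 0"
    then have e0: "p1!0 = p2!0" by (simp add: h_def)
    have "p1 = p2"
    proof (rule nth_equalityI)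
      fix i assume "i < length p1"
      then show "p1!i = p2!i" using e0 same len by (cases "i = 0") auto
    qed (use len in simp)
    then have "P = Q" using C1 C2 Cfun by blast
    then show False using VV by (simp add: ssd_def)
  qed
  have hh: "(p1!0 - p2!0)^2 = 4*h^2" by (simp add: h_def power2_eq_square algebra_simps)
  define V where "V = ssd d Q P"
  have V0: "0 < V" using VV ssd_nonneg[of d Q P] by (simp add: V_def ssd_sym order_le_less)
  define \<tau> where "\<tau> = Q!0 - P!0"
  have tP: "(P!0 - Q!0)^2 = \<tau>^2" by (simp add: \<tau>_def power2_commute)
  have pull: "\<And>y. length y = d \<Longrightarrow> light d y P \<Longrightarrow> light d y Q \<Longrightarrow>
      \<exists>r. C r y \<and> length r = d \<and> r!0 = p1!0 + h \<and> ssd d r p1 = h^2"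
  proof -
    fix y :: "'q list" assume y: "length y = d" "light d y P" "light d y Q"
    obtain r where r: "C r y" using Csur y(1) by blast
    have "light d r p1" "light d r p2" using Clt[OF r C1] Clt[OF r C2] y by auto
    then have "r!0 = p1!0 + h \<and> ssd d r p1 = h^2" using sphere[OF same h_def h0] by blast
    then show "\<exists>r. C r y \<and> length r = d \<and> r!0 = p1!0 + h \<and> ssd d r p1 = h^2" using r Clen by blast
  qed
  have bound: "ssd d r1 r2 \<le> 4*h^2" if "ssd d r1 p1 = h^2" "ssd d r2 p1 = h^2" for r1 r2
    using ssd_two[of d r1 r2 p1] ssd_two_le[of d r1 p1 r2] that by simp
  consider "\<tau>^2 = V" | "\<tau>^2 < V" | "V < \<tau>^2" using linorder_less_linear by blast
  then show ?thesis
  proof cases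
    case 1
    then have "light d P Q" unfolding light_def V_def by (simp add: ssd_sym tP)
    then have "light d p1 p2" using Clt[OF C1 C2] by simp
    moreover have "ssd d p1 p2 = 0" unfolding ssd_def using same by simp
    ultimately show ?thesis using hh h0 by (simp add: light_def)
  next
    case 2
    define D where "D = V - \<tau>^2"
    have D0: "0 < D" using 2 by (simp add: D_def)
    define K where "K = V * (4*h^2 + 1) / D"
    have K0: "0 \<le> K" using D0 V0 by (simp add: K_def)
    define u where "u = qsqrt (V + K)"
    have uu: "u * u = V + K" using qsqrt_prop[OF EF, of "V+K"] V0 K0 by (simp add: u_def)
    define t where "t = (u + \<tau>)/2"
    define c where "c = (V - \<tau>^2 + 2*t*\<tau>)/2"
    define R where "R = t^2 - c^2/V"
    have "4*V*R = 4*V*t^2 - 4*c^2" using V0 by (simp add: R_def field_simps)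
    also have "\<dots> = V*(2*t)^2 - (2*c)^2" by (simp add: power2_eq_square)
    also have "\<dots> = D * (u*u - V)"
    proof -
      have t2: "2*t = u + \<tau>" by (simp add: t_def)
      have c2': "2*c = V - \<tau>^2 + (2*t)*\<tau>" by (simp add: c_def)
      have c2: "2*c = V - \<tau>^2 + (u+\<tau>)*\<tau>" using c2' t2 by simp
      show ?thesis unfolding t2 c2 D_def by algebra
    qed
    also have "\<dots> = D * K" using uu by simp
    also have "\<dots> = V * (4*h^2 + 1)" using D0 by (simp add: K_def)
    finally have "V * (4*R) = V * (4*h^2 + 1)" by (simp only: mult.assoc mult.left_commute)
    then have R1: "4*R = 4*h^2 + 1" using V0 by simp
    have "0 \<le> 4*h^2 + 1" by (simp add: add_nonneg_pos)
    then have "0 \<le> 4*R" using R1 by simp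
    then have R0: "0 \<le> R" by simp
    obtain y1 y2 where y: "length y1 = d" "length y2 = d" "light d y1 P" "light d y1 Q"
      "light d y2 P" "light d y2 Q" "y1!0 = P!0 + t" "y2!0 = P!0 + t" "ssd d y1 y2 = 4*R"
      using slice[OF d3 EF V_def V0 c_def[unfolded \<tau>_def] R_def R0] by blast
    obtain r1 where r1: "C r1 y1" "r1!0 = p1!0 + h" "ssd d r1 p1 = h^2" using pull[OF y(1) y(3) y(4)] by blast
    obtain r2 where r2: "C r2 y2" "r2!0 = p1!0 + h" "ssd d r2 p1 = h^2" using pull[OF y(2) y(5) y(6)] by blast
    have "ssd d r1 r2 = 4*R" using Csim[OF r1(1) r2(1)] r1 r2 y by simp
    then show ?thesis using bound[OF r1(3) r2(3)] R1 by simp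
  next
    case 3
    have t0: "\<tau> \<noteq> 0" using 3 V0 by auto
    define t where "t = \<tau>/2"
    define c where "c = V/2"
    define R where "R = \<tau>^2/4 - V/4"
    have cdef: "c = (V - (Q!0-P!0)^2 + 2*t*(Q!0-P!0))/2" by (simp add: c_def t_def \<tau>_def power2_eq_square)
    have Rdef: "R = t^2 - c^2/V" using V0 by (simp add: R_def t_def c_def power2_eq_square field_simps)
    have R0: "0 < R" using 3 by (simp add: R_def)
    obtain y1 y2 where y: "length y1 = d" "length y2 = d" "light d y1 P" "light d y1 Q"
      "light d y2 P" "light d y2 Q" "y1!0 = P!0 + t" "y2!0 = P!0 + t" "ssd d y1 y2 = 4*R"
      "\<forall>i\<in>?I. y1!i + y2!i = 2*P!i + 2*(c/V)*(Q!i - P!i)"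
      using slice[OF d3 EF V_def V0 cdef Rdef] R0 by auto
    have ysum: "\<forall>i\<in>?I. y1!i + y2!i = P!i + Q!i" using y(10) V0 by (simp add: c_def)
    have ysum0: "y1!0 + y2!0 = P!0 + Q!0" using y(7,8) by (simp add: t_def \<tau>_def)
    obtain r1 where r1: "C r1 y1" "length r1 = d" "r1!0 = p1!0 + h" "ssd d r1 p1 = h^2" using pull[OF y(1) y(3) y(4)] by blast
    obtain r2 where r2: "C r2 y2" "length r2 = d" "r2!0 = p1!0 + h" "ssd d r2 p1 = h^2" using pull[OF y(2) y(5) y(6)] by blast
    define a where "a = (\<lambda>i. r1!i - p1!i)"
    define b where "b = (\<lambda>i. r2!i - p1!i)"
    define ab where "ab = (\<Sum>i\<in>?I. a i * b i)"
    have aa: "(\<Sum>i\<in>?I. (a i)^2) = h^2" using r1(4) by (simp add: a_def ssd_def)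
    have bb: "(\<Sum>i\<in>?I. (b i)^2) = h^2" using r2(4) by (simp add: b_def ssd_def)
    have r12: "ssd d r1 r2 = 4*R" using Csim[OF r1(1) r2(1)] r1 r2 y by simp
    have claim: "h^2 + ab = 0"
    proof (rule ccontr)
      assume ne: "h^2 + ab \<noteq> 0"
      define s where "s = 2*h^2/(h^2+ab)"
      have sS: "s * (h^2 + ab) = 2*h^2" using ne by (simp add: s_def)
      have s0: "s \<noteq> 0" using sS h0 by auto
      define x where "x = mk d (\<lambda>i. p1!i + s*(r2!i - p1!i))"
      have lr2p1: "light d p1 r2" using r2 by (simp add: light_def ssd_sym power2_commute)
      have lx: "light d x p1" "light d x r2" using comb_light[OF lr2p1 d0, of s] by (simp_all add: x_def)
      obtain X where X: "C x X" using Ctot[of x] by (auto simp: x_def)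
      have lX: "light d X P" "light d X y2" using Clt[OF X C1] Clt[OF X r2(1)] lx by auto
      have lPy2: "light d P y2" using y(5) light_sym by blast
      have Pny2: "P \<noteq> y2" using y(8) t0 by (auto simp: t_def)
      obtain \<sigma> where sig: "X = mk d (\<lambda>i. P!i + \<sigma>*(y2!i - P!i))"
        using line_char[OF len(3) y(2) _ _ lPy2 Pny2 lX] Clen[OF X] d0 by auto
      define Z where "Z = mk d (\<lambda>i. y1!i + \<sigma>*(Q!i - y1!i))"
      have lZ: "light d Z y1" "light d Z Q" using comb_light[OF y(4) d0, of \<sigma>] by (simp_all add: Z_def)
      have lXZ: "light d X Z"
      proof -
        have "ssd d X Z = ssd d P y1" unfolding ssd_def
        proof (rule sum.cong)
          fix i assume i: "i \<in> ?I"
          have "X!i - Z!i = P!i - y1!i + \<sigma>*(y1!i + y2!i - P!i - Q!i)"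
            using i by (simp add: sig Z_def algebra_simps)
          then show "(X!i - Z!i)^2 = (P!i - y1!i)^2" using ysum i by simp
        qed simp
        moreover have "X!0 - Z!0 = P!0 - y1!0 + \<sigma>*(y1!0 + y2!0 - P!0 - Q!0)"
          using d0 by (simp add: sig Z_def algebra_simps)
        ultimately show ?thesis using y(3) ysum0 by (simp add: light_def ssd_sym power2_commute)
      qed
      obtain z where z: "C z Z" using Csur[of Z] by (auto simp: Z_def)
      have lz: "light d z r1" "light d z p2" using Clt[OF z r1(1)] Clt[OF z C2] lZ by auto
      have lr1p2: "light d r1 p2"
      proof -
        have "ssd d r1 p2 = ssd d r1 p1" unfolding ssd_def by (rule sum.cong) (use same in auto)
        then show ?thesis using r1 by (simp add: light_def h_def power2_eq_square algebra_simps)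
      qed
      have r1np2: "r1 \<noteq> p2"
      proof
        assume "r1 = p2"
        then have "p2!0 = p1!0 + h" using r1(3) by simp
        then have "h = 2*h" by (simp add: h_def field_simps)
        then show False using h0 by simp
      qed
      obtain s' where z': "z = mk d (\<lambda>i. r1!i + s'*(p2!i - r1!i))"
        using line_char[OF r1(2) len(2) _ _ lr1p2 r1np2 lz] Clen[OF z] d0 by auto
      have lxz: "light d x z" using Clt[OF X z] lXZ by simp
      have "ssd d x z = (\<Sum>i\<in>?I. (s * b i + (s' - 1) * a i)^2)" unfolding ssd_def
      proof (rule sum.cong)
        fix i assume i: "i \<in> ?I"
        then show "(x!i - z!i)^2 = (s * b i + (s' - 1) * a i)^2"
          using same by (simp add: x_def z' a_def b_def algebra_simps)
      qed simp
      also have "\<dots> = s^2*h^2 + 2*s*(s'-1)*ab + (s'-1)^2*h^2"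
        unfolding sq_comb aa bb ab_def by (simp add: mult.commute)
      finally have E1: "ssd d x z = s^2*h^2 + 2*s*(s'-1)*ab + (s'-1)^2*h^2" .
      have E2: "x!0 - z!0 = s*h - h - s'*h" using d0 r1(3) r2(3)
        by (simp add: x_def z' h_def algebra_simps)
      have E: "s^2*h^2 + 2*s*(s'-1)*ab + (s'-1)^2*h^2 = (s*h - h - s'*h)^2"
        using lxz E1 E2 by (simp add: light_def)
      have "s * (h^2 - ab) = 0" using E sS by algebra
      then have abh: "ab = h^2" using s0 by simp
      have "(\<Sum>i\<in>?I. (1 * a i + (-1) * b i)^2) = 0" unfolding sq_comb aa bb ab_def[symmetric] abh by simp
      then have "\<And>i. i \<in> ?I \<Longrightarrow> a i = b i" using sumsq_zero[of "\<lambda>i. 1 * a i + (-1) * b i" d] by simp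
      then have "r1 = r2"
      proof (intro nth_equalityI)
        fix i assume "i < length r1" "\<And>i. i \<in> ?I \<Longrightarrow> a i = b i"
        then show "r1!i = r2!i" using r1(2,3) r2(2,3) by (cases "i = 0") (auto simp: a_def b_def)
      qed (use r1(2) r2(2) in simp)
      then have "y1 = y2" using r1(1) r2(1) Cfun by blast
      then show False using y(9) R0 by (simp add: ssd_def)
    qed
    have "ssd d r1 r2 = 4*h^2" using ssd_two[of d r1 r2 p1] r1(4) r2(4) claim
      by (simp add: ab_def a_def b_def)
    then have "(p1!0 - p2!0)^2 = \<tau>^2 - V" using r12 hh by (simp add: R_def)
    then show ?thesis using tP V0 by simp
  qed
qed

lemma light_iff:
  assumes EF: "euclidean_field TYPE('q::linordered_field)" and len: "length p = d" "length (q::'q list) = d" "1 \<le> d"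
  shows "vlen (vsub (scomp p) (scomp q)) = \<bar>tcomp p - tcomp q\<bar> \<longleftrightarrow> light d p q"
proof -
  have ne: "p \<noteq> []" "q \<noteq> []" using len by auto
  show ?thesis unfolding vlen_def sumsq_bridge[OF len] qsqrt_eq[OF EF ssd_nonneg] light_def
    using ne by (simp add: tcomp_def hd_conv_nth power2_eq_square)
qed

lemma vlen_ssd:
  assumes EF: "euclidean_field TYPE('q::linordered_field)" and len: "length p = d" "length (q::'q list) = d" "1 \<le> d"
  shows "vlen (vsub (scomp p) (scomp q)) = qsqrt (ssd d p q)"
  unfolding vlen_def sumsq_bridge[OF len] ..

lemma qsqrt_inj:
  assumes EF: "euclidean_field TYPE('q::linordered_field)" "0 \<le> a" "0 \<le> (b::'q)" "qsqrt a = qsqrt b"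
  shows "a = b"
  using qsqrt_prop[OF EF(1) assms(2)] qsqrt_prop[OF EF(1) assms(3)] assms(4) by metis

lemma ssd_self: "ssd d p p = 0" by (simp add: ssd_def)

theorem mainTheorem2:
  fixes d :: nat and B Ob IOb Ph :: "'b set"
    and W :: "'b \<Rightarrow> 'b \<Rightarrow> 'q::linordered_field list \<Rightarrow> bool"
    and m k :: 'b and e1 e2 :: "'b set"
  assumes "d \<ge> 3"
    and "SpecRel d B Ob IOb Ph W"
    and "m \<in> IOb" and "k \<in> IOb"
    and "e1 \<in> Evs d B W k" and "e2 \<in> Evs d B W k"
    and "k \<in> e1 \<inter> e2"
    and "has_crd d B W m e1" and "has_crd d B W m e2"
    and "dist_ob d B W m e1 e2 \<noteq> 0"
  shows "has_crd d B W k e1 \<and> has_crd d B W k e2 \<and>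
         time_ob d B W m e1 e2 > time_ob d B W k e1 e2"
proof -
  note d3 = assms(1)
  have d1: "1 \<le> d" using d3 by simp
  have Fr: "\<And>ob b p. W ob b p \<Longrightarrow> ob \<in> Ob \<and> b \<in> B \<and> length p = d"
    and IO: "IOb \<subseteq> Ob"
    and EF: "euclidean_field TYPE('q)"
    and Self: "\<forall>m\<in>Ob. \<forall>p\<in>Cd d B W m. m \<in> ev B W m p \<longleftrightarrow> scomp p = replicate (d - 1) 0"
    and Ph0: "\<forall>m\<in>IOb. \<forall>p q. length p = d \<and> length q = d \<longrightarrow>
        (vlen (vsub (scomp p) (scomp q)) = \<bar>tcomp p - tcomp q\<bar> \<longleftrightarrow>
         Ph \<inter> ev B W m p \<inter> ev B W m q \<noteq> {})"
    and AxEv: "\<forall>m\<in>IOb. \<forall>k\<in>IOb. Evs d B W m = Evs d B W k"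
    and SD: "\<forall>m\<in>IOb. \<forall>k\<in>IOb. \<forall>e1\<in>Evs d B W m. \<forall>e2\<in>Evs d B W m.
        sim_ob d B W m e1 e2 \<and> sim_ob d B W k e1 e2 \<longrightarrow>
        dist_ob d B W m e1 e2 = dist_ob d B W k e1 e2"
    using assms(2) unfolding SpecRel_def by blast+
  have Ph: "light d p q \<longleftrightarrow> Ph \<inter> ev B W ob p \<inter> ev B W ob q \<noteq> {}"
    if "ob \<in> IOb" "length p = d" "length q = d" for ob p q
    using Ph0 that light_iff[OF EF that(2,3) d1] by blast
  have nonempty: "ev B W ob p \<noteq> {}" if "ob \<in> IOb" "length p = d" for ob p
    using Ph[OF that that(2)] by (auto simp: light_def ssd_self)
  have inj: "p = q" if ob: "ob \<in> IOb" and len: "length p = d" "length q = d"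
    and e: "ev B W ob p = ev B W ob q" for ob p q
  proof (rule ccontr)
    assume ne: "p \<noteq> q"
    show False
    proof (cases "light d p q")
      case False
      then show False using Ph[OF ob len] Ph[OF ob len(1) len(1)] e by (simp add: light_def ssd_self)
    next
      case True
      define r where "r = mk d (\<lambda>i. if i = 0 then q!0 else 2*p!i - q!i)"
      have lr: "length r = d" by (simp add: r_def)
      have "ssd d r p = ssd d p q" unfolding ssd_def r_def
        by (rule sum.cong) (auto simp: power2_eq_square algebra_simps)
      then have lrp: "light d r p" using True d1 by (simp add: light_def r_def power2_commute)
      have nlrq: "\<not> light d r q"
      proof
        assume "light d r q"
        then have "ssd d r q = 0" using d1 by (simp add: light_def r_def)
        moreover have "ssd d r q = 4 * ssd d p q" unfolding ssd_def r_def sum_distrib_left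
          by (rule sum.cong) (auto simp: power2_eq_square algebra_simps)
        ultimately have s0: "ssd d p q = 0" by simp
        then have t0: "p!0 = q!0" using True by (simp add: light_def)
        have "\<And>i. i \<in> {1..<d} \<Longrightarrow> p!i - q!i = 0"
          using s0 sumsq_zero[of "\<lambda>i. p!i - q!i" d] by (simp add: ssd_def)
        then have "p = q"
        proof (intro nth_equalityI)
          fix i assume "i < length p" "\<And>i. i \<in> {1..<d} \<Longrightarrow> p!i - q!i = 0"
          then show "p!i = q!i" using t0 len by (cases "i = 0") auto
        qed (use len in simp)
        then show False using ne by simp
      qed
      obtain ph where "ph \<in> Ph \<inter> ev B W ob r \<inter> ev B W ob p" using Ph[OF ob lr len(1)] lrp by blast
      then have "ph \<in> Ph \<inter> ev B W ob r \<inter> ev B W ob q" using e by simp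
      then show False using Ph[OF ob lr len(2)] nlrq by blast
    qed
  qed
  have Cd_eq: "p \<in> Cd d B W ob \<longleftrightarrow> length p = d" if "ob \<in> IOb" for ob p
    using nonempty[OF that] by (auto simp: Cd_def)
  have crd: "has_crd d B W ob (ev B W ob p) \<and> Crd d B W ob (ev B W ob p) = p"
    if ob: "ob \<in> IOb" and len: "length p = d" for ob p
  proof -
    have u: "\<exists>!p'. p' \<in> Cd d B W ob \<and> ev B W ob p' = ev B W ob p"
      using Cd_eq[OF ob] len inj[OF ob] by blast
    then have "Crd d B W ob (ev B W ob p) = p" unfolding Crd_def
      using Cd_eq[OF ob] len by (metis (mono_tags, lifting) the1_equality)
    with u show ?thesis by (simp add: has_crd_def)
  qed
  have Evs_iff: "e \<in> Evs d B W ob \<longleftrightarrow> (\<exists>p. length p = d \<and> e = ev B W ob p)" if "ob \<in> IOb" for ob e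
    using Cd_eq[OF that] by (auto simp: Evs_def)
  define C where "C = (\<lambda>p p'. length p = d \<and> length p' = d \<and> ev B W k p = ev B W m p')"
  note mI = assms(3) and kI = assms(4)
  have Clen: "\<And>p p'. C p p' \<Longrightarrow> length p = d \<and> length p' = d" by (simp add: C_def)
  have Ctot: "\<exists>p'. C p p'" if "length p = d" for p
  proof -
    have "ev B W k p \<in> Evs d B W m" using Evs_iff[OF kI] AxEv mI kI that by blast
    then show ?thesis using Evs_iff[OF mI] that by (auto simp: C_def)
  qed
  have Csur: "\<exists>p. C p p'" if "length p' = d" for p'
  proof -
    have "ev B W m p' \<in> Evs d B W k" using Evs_iff[OF mI] AxEv mI kI that by blast
    then show ?thesis using Evs_iff[OF kI] that by (auto simp: C_def)
  qed
  have Cfun: "\<And>p p' q'. C p p' \<Longrightarrow> C p q' \<Longrightarrow> p' = q'"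
    using inj[OF mI] by (auto simp: C_def)
  have Clt: "\<And>p p' q q'. C p p' \<Longrightarrow> C q q' \<Longrightarrow> light d p q \<longleftrightarrow> light d p' q'"
    using Ph[OF kI] Ph[OF mI] by (auto simp: C_def)
  have Csim: "ssd d p q = ssd d p' q'"
    if cp: "C p p'" and cq: "C q q'" and t1: "p!0 = q!0" and t2: "p'!0 = q'!0" for p p' q q'
  proof -
    have len: "length p = d" "length p' = d" "length q = d" "length q' = d" using cp cq by (auto simp: C_def)
    have ek: "ev B W m p' = ev B W k p" "ev B W m q' = ev B W k q" using cp cq by (auto simp: C_def)
    have in1: "ev B W m p' \<in> Evs d B W m" "ev B W m q' \<in> Evs d B W m"
      using Evs_iff[OF mI] len by auto
    have cm: "has_crd d B W m (ev B W m p') \<and> Crd d B W m (ev B W m p') = p'"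
       "has_crd d B W m (ev B W m q') \<and> Crd d B W m (ev B W m q') = q'"
      using crd[OF mI] len by auto
    have ck: "has_crd d B W k (ev B W m p') \<and> Crd d B W k (ev B W m p') = p"
       "has_crd d B W k (ev B W m q') \<and> Crd d B W k (ev B W m q') = q"
      unfolding ek using crd[OF kI] len by auto
    have ne: "p \<noteq> []" "p' \<noteq> []" "q \<noteq> []" "q' \<noteq> []" using len d1 by auto
    have "sim_ob d B W m (ev B W m p') (ev B W m q')" using cm t2 ne
      by (simp add: sim_ob_def tcomp_def hd_conv_nth)
    moreover have "sim_ob d B W k (ev B W m p') (ev B W m q')" using ck t1 ne
      by (simp add: sim_ob_def tcomp_def hd_conv_nth)
    ultimately have "dist_ob d B W m (ev B W m p') (ev B W m q') = dist_ob d B W k (ev B W m p') (ev B W m q')"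
      using SD mI kI in1 by blast
    then have "qsqrt (ssd d p' q') = qsqrt (ssd d p q)" using cm ck
      by (simp add: dist_ob_def vlen_ssd[OF EF len(2) len(4) d1] vlen_ssd[OF EF len(1) len(3) d1])
    then show ?thesis using qsqrt_inj[OF EF ssd_nonneg ssd_nonneg] by metis
  qed
  obtain p1 where p1: "length p1 = d" "e1 = ev B W k p1" using assms(5) Evs_iff[OF kI] by blast
  obtain p2 where p2: "length p2 = d" "e2 = ev B W k p2" using assms(6) Evs_iff[OF kI] by blast
  have hk: "has_crd d B W k e1" "Crd d B W k e1 = p1" "has_crd d B W k e2" "Crd d B W k e2 = p2"
    using crd[OF kI p1(1)] crd[OF kI p2(1)] p1 p2 by auto
  have sp: "\<forall>i\<in>{1..<d}. p!i = 0" if "length p = d" "k \<in> ev B W k p" for p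
  proof
    fix i assume i: "i \<in> {1..<d}"
    have "scomp p = replicate (d - 1) 0" using Self IO kI that Cd_eq[OF kI] by blast
    moreover have "i - 1 < d - 1" using i by auto
    ultimately have "tl p ! (i - 1) = 0" by (simp add: scomp_def)
    moreover have "tl p ! (i - 1) = p ! i" using i that(1) by (cases i) (auto simp: nth_tl)
    ultimately show "p!i = 0" by simp
  qed
  have same: "\<forall>i\<in>{1..<d}. p1!i = p2!i" using sp[OF p1(1)] sp[OF p2(1)] assms(7) p1 p2 by auto
  define P where "P = Crd d B W m e1"
  define Q where "Q = Crd d B W m e2"
  have "P \<in> Cd d B W m \<and> ev B W m P = e1" using assms(8) unfolding has_crd_def P_def Crd_def by (rule theI')
  then have C1: "C p1 P" using p1 Cd_eq[OF mI] by (auto simp: C_def)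
  have "Q \<in> Cd d B W m \<and> ev B W m Q = e2" using assms(9) unfolding has_crd_def Q_def Crd_def by (rule theI')
  then have C2: "C p2 Q" using p2 Cd_eq[OF mI] by (auto simp: C_def)
  have lPQ: "length P = d" "length Q = d" using C1 C2 by (auto simp: C_def)
  have "qsqrt (ssd d P Q) \<noteq> 0" using assms(10)
    by (simp add: dist_ob_def P_def[symmetric] Q_def[symmetric] vlen_ssd[OF EF lPQ d1])
  then have VV: "ssd d P Q \<noteq> 0" using qsqrt_eq[OF EF ssd_nonneg, of d P Q 0] by auto
  have lt: "(p1!0 - p2!0)^2 < (P!0 - Q!0)^2"
  proof (rule core[where C=C])
    show "d \<ge> 3" by (rule d3)
    show "euclidean_field TYPE('q)" by (rule EF)
    show "\<And>p p'. C p p' \<Longrightarrow> length p = d \<and> length p' = d" by (rule Clen)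
    show "\<And>p. length p = d \<Longrightarrow> \<exists>p'. C p p'" by (rule Ctot)
    show "\<And>p'. length p' = d \<Longrightarrow> \<exists>p. C p p'" by (rule Csur)
    show "\<And>p p' q'. C p p' \<Longrightarrow> C p q' \<Longrightarrow> p' = q'" by (rule Cfun)
    show "\<And>p p' q q'. C p p' \<Longrightarrow> C q q' \<Longrightarrow> light d p q \<longleftrightarrow> light d p' q'" by (rule Clt)
    show "\<And>p p' q q'. C p p' \<Longrightarrow> C q q' \<Longrightarrow> p!0 = q!0 \<Longrightarrow> p'!0 = q'!0 \<Longrightarrow> ssd d p q = ssd d p' q'"
      by (rule Csim)
  qed (fact C1 C2 same VV)+
  have ne: "p1 \<noteq> []" "p2 \<noteq> []" "P \<noteq> []" "Q \<noteq> []" using p1 p2 lPQ d1 by auto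
  have "\<bar>p1!0 - p2!0\<bar> < \<bar>P!0 - Q!0\<bar>"
    using lt by (metis power2_abs power_less_imp_less_base abs_ge_zero)
  then show ?thesis using hk ne
    by (simp add: time_ob_def P_def[symmetric] Q_def[symmetric] tcomp_def hd_conv_nth)
qed

end
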